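(* Let $F(x_1,\dots,x_n)=f_1\wedge\dots\wedge f_m$ and $G(y_1,\dots,y_{n'})=g_1\wedge\dots\wedge g_{m'}$ be CNF formulas such that $F\le^{\oplus}G$. If there exists a $\mathsf{Res}[\oplus]$ refutation of $G$ with $s$ steps, then there exists a $\mathsf{Res}[\oplus]$ refutation of $F$ with $2nm'+s$ steps. (In particular, $\mathsf{Res}[\oplus]$ is closed under simple parity reductions.)
   Context: Simple parity reduction: $F\le^{\oplus}G$ if there is an $\mathbb{F}_2$-linear map $\mathsf{redu}:\{0,1\}^n\to\{0,1\}^{n'}$ (each output bit is the XOR of a subset of input bits; $g\circ\mathsf{redu}$ denotes substituting each $y_i$ by the corresponding linear form) such that for every clause $g$ of $G$, one of: $g\circ\mathsf{redu}\equiv\mathsf{True}$; $g\circ\mathsf{redu}$ equals some clause of $F$; or $g$ is a width-1 clause (single literal) and $g\circ\mathsf{redu}$ is the XOR (sum over $\mathbb{F}_2$ of the corresponding linear equations) of a subset of clauses of $F$, which are then width-1. $\mathsf{Res}[\oplus]$ (resolution over linear equations modulo 2, Itsykson–Sokolov): lines are linear clauses, i.e., disjunctions of linear equations over $\mathbb{F}_2$; a refutation of a CNF is a sequence of linear clauses ending with the empty clause, where each line is an initial clause (a literal $x$ read as $x=1$, $\neg x$ as $x=0$), or is derived by the resolution rule (from $C\vee(f=0)$ and $D\vee(f=1)$ derive $C\vee D$), or by weakening (derive any linear clause semantically implied by an earlier line). The number of steps is the number of lines. *)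

theory Defs
  imports Main
begin

text \<open>Propositional variables are natural numbers; a formula in n variables uses
  variables 0,...,n-1 (standing for x_1,...,x_n).  A literal is a pair (v, b):
  (v, True) is the positive literal x_v, (v, False) the negative literal.\<close>

type_synonym lit = "nat \<times> bool"
type_synonym clause = "lit set"
type_synonym cnf = "clause list"

definition cnf_over :: "nat \<Rightarrow> cnf \<Rightarrow> bool" where
  "cnf_over n F \<longleftrightarrow> (\<forall>C\<in>set F. \<forall>(v, b)\<in>C. v < n)"

text \<open>A linear equation over F_2: (S, b) stands for (sum of x_i, i in S) = b (mod 2).
  A linear clause is a (finite) set of linear equations, read as their disjunction.\<close>

type_synonym leq = "nat set \<times> bool"
type_synonym lclause = "leq set"

definition eval_leq :: "(nat \<Rightarrow> bool) \<Rightarrow> leq \<Rightarrow> bool" where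
  "eval_leq \<alpha> e \<longleftrightarrow> (odd (card {i \<in> fst e. \<alpha> i}) = snd e)"

definition eval_lclause :: "(nat \<Rightarrow> bool) \<Rightarrow> lclause \<Rightarrow> bool" where
  "eval_lclause \<alpha> L \<longleftrightarrow> (\<exists>e\<in>L. eval_leq \<alpha> e)"

definition lclause_over :: "nat \<Rightarrow> lclause \<Rightarrow> bool" where
  "lclause_over n L \<longleftrightarrow> finite L \<and> (\<forall>e\<in>L. fst e \<subseteq> {..<n})"

definition limplies :: "lclause \<Rightarrow> lclause \<Rightarrow> bool" where
  "limplies L1 L2 \<longleftrightarrow> (\<forall>\<alpha>. eval_lclause \<alpha> L1 \<longrightarrow> eval_lclause \<alpha> L2)"

definition ltaut :: "lclause \<Rightarrow> bool" where
  "ltaut L \<longleftrightarrow> (\<forall>\<alpha>. eval_lclause \<alpha> L)"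

definition lit_eq :: "lit \<Rightarrow> leq" where
  "lit_eq l = ({fst l}, snd l)"

definition clause_lclause :: "clause \<Rightarrow> lclause" where
  "clause_lclause C = lit_eq ` C"

definition res_rule :: "lclause \<Rightarrow> lclause \<Rightarrow> lclause \<Rightarrow> bool" where
  "res_rule A B R \<longleftrightarrow>
     (\<exists>f C D. A = insert (f, False) C \<and> B = insert (f, True) D \<and> R = C \<union> D)"

text \<open>Its number of steps is its length.\<close>

definition valid_line :: "nat \<Rightarrow> cnf \<Rightarrow> lclause list \<Rightarrow> nat \<Rightarrow> bool" where
  "valid_line n F Ls k \<longleftrightarrow>
     lclause_over n (Ls ! k) \<and>
     ((\<exists>C\<in>set F. Ls ! k = clause_lclause C)
      \<or> (\<exists>i<k. \<exists>j<k. res_rule (Ls ! i) (Ls ! j) (Ls ! k))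
      \<or> (\<exists>i<k. limplies (Ls ! i) (Ls ! k)))"

definition resxor_refutation :: "nat \<Rightarrow> cnf \<Rightarrow> lclause list \<Rightarrow> bool" where
  "resxor_refutation n F Ls \<longleftrightarrow>
     Ls \<noteq> [] \<and> last Ls = {} \<and> (\<forall>k<length Ls. valid_line n F Ls k)"

text \<open>An F_2-linear map redu : {0,1}^n \<rightarrow> {0,1}^n' is given by R: output bit i
  (i < n') is the XOR of the input bits in R i \<subseteq> {0..n-1}.\<close>

definition subst_clause :: "(nat \<Rightarrow> nat set) \<Rightarrow> clause \<Rightarrow> lclause" where
  "subst_clause R g = (\<lambda>l. (R (fst l), snd l)) ` g"

text \<open>The XOR (sum over F_2) of the linear equations of the width-1 clauses F!j, j in J.\<close>

definition unit_sum :: "cnf \<Rightarrow> nat set \<Rightarrow> leq" where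
  "unit_sum F J =
     ({u. odd (card {j \<in> J. fst (the_elem (F ! j)) = u})},
      odd (card {j \<in> J. snd (the_elem (F ! j))}))"

definition simple_parity_red :: "nat \<Rightarrow> cnf \<Rightarrow> nat \<Rightarrow> cnf \<Rightarrow> (nat \<Rightarrow> nat set) \<Rightarrow> bool" where
  "simple_parity_red n F n' G R \<longleftrightarrow>
     (\<forall>i<n'. R i \<subseteq> {..<n}) \<and>
     (\<forall>g\<in>set G.
        ltaut (subst_clause R g)
        \<or> (\<exists>f\<in>set F. subst_clause R g = clause_lclause f)
        \<or> (card g = 1 \<and>
           (\<exists>J \<subseteq> {..<length F}. (\<forall>j\<in>J. card (F ! j) = 1) \<and>
               subst_clause R g = {unit_sum F J})))"

end

theory Submission
  imports Defs
begin


definition deriv :: "nat \<Rightarrow> cnf \<Rightarrow> lclause list \<Rightarrow> bool" where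
  "deriv n F Ls \<longleftrightarrow> (\<forall>k<length Ls. valid_line n F Ls k)"

lemma valid_line_append:
  assumes "k < length Ls"
  shows "valid_line n F (Ls @ Q) k = valid_line n F Ls k"
proof -
  have e: "\<And>i. i \<le> k \<Longrightarrow> (Ls @ Q) ! i = Ls ! i" using assms by (simp add: nth_append)
  show ?thesis unfolding valid_line_def using e
    by (smt (verit, best) less_imp_le_nat order_refl)
qed

lemma deriv_Nil: "deriv n F []" by (simp add: deriv_def)

lemma deriv_snoc:
  assumes "deriv n F Ls" "lclause_over n L"
    "(\<exists>C\<in>set F. L = clause_lclause C) \<or> (\<exists>X\<in>set Ls. \<exists>Y\<in>set Ls. res_rule X Y L)
     \<or> (\<exists>X\<in>set Ls. limplies X L)"
  shows "deriv n F (Ls @ [L])"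
  unfolding deriv_def
proof (intro allI impI)
  fix k assume k: "k < length (Ls @ [L])"
  show "valid_line n F (Ls @ [L]) k"
  proof (cases "k < length Ls")
    case True
    then show ?thesis using assms(1) valid_line_append deriv_def by metis
  next
    case False
    then have kk: "k = length Ls" using k by simp
    have e: "\<And>i. i < k \<Longrightarrow> (Ls @ [L]) ! i = Ls ! i" using kk by (simp add: nth_append)
    have L: "(Ls @ [L]) ! k = L" using kk by simp
    from assms(3) show ?thesis
    proof (elim disjE)
      assume "\<exists>C\<in>set F. L = clause_lclause C" then show ?thesis
        unfolding valid_line_def L using assms(2) by blast
    next
      assume "\<exists>X\<in>set Ls. \<exists>Y\<in>set Ls. res_rule X Y L"
      then obtain i j where "i < k" "j < k" "res_rule (Ls!i) (Ls!j) L"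
        using kk by (metis in_set_conv_nth)
      then show ?thesis unfolding valid_line_def L using assms(2) e by metis
    next
      assume "\<exists>X\<in>set Ls. limplies X L"
      then obtain i where "i < k" "limplies (Ls!i) L"
        using kk by (metis in_set_conv_nth)
      then show ?thesis unfolding valid_line_def L using assms(2) e by metis
    qed
  qed
qed

lemma deriv_snoc_D:
  assumes "deriv n F (Ls @ [L])"
  shows "deriv n F Ls \<and> lclause_over n L \<and>
    ((\<exists>C\<in>set F. L = clause_lclause C) \<or> (\<exists>X\<in>set Ls. \<exists>Y\<in>set Ls. res_rule X Y L)
     \<or> (\<exists>X\<in>set Ls. limplies X L))"
proof -
  have d1: "deriv n F Ls" using assms unfolding deriv_def
    by (metis valid_line_append length_append_singleton less_SucI)
  have v: "valid_line n F (Ls @ [L]) (length Ls)" using assms unfolding deriv_def by simp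
  have e: "\<And>i. i < length Ls \<Longrightarrow> (Ls @ [L]) ! i = Ls ! i" by (simp add: nth_append)
  have L: "(Ls @ [L]) ! length Ls = L" by simp
  from v show ?thesis unfolding valid_line_def L using d1 e
    by (metis nth_mem)
qed

lemma deriv_over: "deriv n F Ls \<Longrightarrow> L \<in> set Ls \<Longrightarrow> lclause_over n L"
  unfolding deriv_def valid_line_def by (metis in_set_conv_nth)

lemma deriv_initials:
  assumes "\<forall>L\<in>set Ls. lclause_over n L \<and> (\<exists>C\<in>set F. L = clause_lclause C)"
  shows "deriv n F Ls"
  using assms unfolding deriv_def valid_line_def by (meson nth_mem)

lemma deriv_refutation: "resxor_refutation n F Ls \<longleftrightarrow> deriv n F Ls \<and> Ls \<noteq> [] \<and> last Ls = {}"
  unfolding resxor_refutation_def deriv_def by blast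

lemma deriv_sound:
  assumes "deriv n G Ls" "\<forall>g\<in>set G. eval_lclause \<alpha> (clause_lclause g)"
  shows "\<forall>L\<in>set Ls. eval_lclause \<alpha> L"
  using assms(1)
proof (induction Ls rule: rev_induct)
  case Nil then show ?case by simp
next
  case (snoc L Ls)
  from deriv_snoc_D[OF snoc.prems] have d: "deriv n G Ls" and
    c: "(\<exists>C\<in>set G. L = clause_lclause C) \<or> (\<exists>X\<in>set Ls. \<exists>Y\<in>set Ls. res_rule X Y L)
     \<or> (\<exists>X\<in>set Ls. limplies X L)" by auto
  have IH: "\<forall>L\<in>set Ls. eval_lclause \<alpha> L" using snoc.IH d by blast
  have "eval_lclause \<alpha> L"
    using c
  proof (elim disjE)
    assume "\<exists>C\<in>set G. L = clause_lclause C" then show ?thesis using assms(2) by blast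
  next
    assume "\<exists>X\<in>set Ls. \<exists>Y\<in>set Ls. res_rule X Y L"
    then obtain X Y where XY: "X \<in> set Ls" "Y \<in> set Ls" "res_rule X Y L" by blast
    then obtain f C D where fCD: "X = insert (f, False) C" "Y = insert (f, True) D" "L = C \<union> D"
      unfolding res_rule_def by blast
    have "eval_lclause \<alpha> X" "eval_lclause \<alpha> Y" using IH XY by auto
    then show ?thesis using fCD unfolding eval_lclause_def eval_leq_def by auto
  next
    assume "\<exists>X\<in>set Ls. limplies X L" then show ?thesis using IH unfolding limplies_def by blast
  qed
  then show ?case using IH by simp
qed

lemma refutation_unsat:
  assumes "resxor_refutation n G Ls"
  shows "\<exists>g\<in>set G. \<not> eval_lclause \<alpha> (clause_lclause g)"
proof (rule ccontr)
  assume "\<not> ?thesis"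
  then have "\<forall>L\<in>set Ls. eval_lclause \<alpha> L" using deriv_sound assms deriv_refutation by blast
  moreover have "{} \<in> set Ls" using assms unfolding resxor_refutation_def by (metis last_in_set)
  ultimately show False unfolding eval_lclause_def by auto
qed

lemma pad:
  assumes "deriv n F Ls" "Ls \<noteq> []" "last Ls = {}" "length Ls \<le> N"
  shows "\<exists>Ls'. resxor_refutation n F Ls' \<and> length Ls' = N"
proof -
  have "deriv n F (Ls @ replicate k {})" for k
  proof (induction k)
    case 0 then show ?case using assms by simp
  next
    case (Suc k)
    have "{} \<in> set (Ls @ replicate k {})" using assms by (metis last_in_set Un_iff set_append)
    moreover have "limplies {} {}" by (simp add: limplies_def)
    moreover have "lclause_over n {}" by (simp add: lclause_over_def)
    ultimately have "deriv n F ((Ls @ replicate k {}) @ [{}])" using deriv_snoc Suc by blast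
    then show ?case by (simp add: replicate_append_same[symmetric])
  qed
  moreover have "last (Ls @ replicate k {}) = {}" for k using assms by (cases k) auto
  ultimately show ?thesis using assms
    by (metis deriv_refutation Nil_is_append_conv le_add_diff_inverse length_append length_replicate)
qed



lemma card_filter_insert:
  assumes "finite A" "x \<notin> A"
  shows "card {i \<in> insert x A. P i} = card {i \<in> A. P i} + (if P x then 1 else 0)"
proof -
  have "{i \<in> insert x A. P i} = (if P x then insert x {i \<in> A. P i} else {i \<in> A. P i})" by auto
  then show ?thesis using assms by simp
qed

lemma card_symdiff_parity:
  assumes "finite A" "finite B"
  shows "odd (card ((A - B) \<union> (B - A))) = (odd (card A) \<noteq> odd (card B))"
proof -
  have "A = (A - B) \<union> (A \<inter> B)" by auto
  then have a: "card A = card (A - B) + card (A \<inter> B)"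
    using assms by (metis card_Un_disjoint finite_Diff finite_Int Diff_disjoint Int_Diff_disjoint inf_commute)
  have "B = (B - A) \<union> (A \<inter> B)" by auto
  then have b: "card B = card (B - A) + card (A \<inter> B)"
    using assms by (metis card_Un_disjoint finite_Diff finite_Int Diff_disjoint Int_Diff_disjoint inf_commute)
  have c: "card ((A - B) \<union> (B - A)) = card (A - B) + card (B - A)"
    using assms by (intro card_Un_disjoint) auto
  show ?thesis using a b c by auto
qed

definition xsum :: "(nat \<Rightarrow> nat set) \<Rightarrow> nat set \<Rightarrow> nat set" where
  "xsum R S = {u. odd (card {i \<in> S. u \<in> R i})}"

lemma xsum_empty[simp]: "xsum R {} = {}" by (simp add: xsum_def)

lemma xsum_single[simp]: "xsum R {v} = R v"
proof -
  have "{i \<in> {v}. u \<in> R i} = (if u \<in> R v then {v} else {})" for u by auto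
  then show ?thesis by (auto simp: xsum_def)
qed

lemma xsum_insert:
  assumes "finite S" "i \<notin> S"
  shows "xsum R (insert i S) = (xsum R S - R i) \<union> (R i - xsum R S)"
proof -
  have c: "card {k \<in> insert i S. u \<in> R k} = card {k \<in> S. u \<in> R k} + (if u \<in> R i then 1 else 0)" for u
    using card_filter_insert[OF assms, of "\<lambda>k. u \<in> R k"] by simp
  show ?thesis unfolding xsum_def set_eq_iff
  proof
    fix u show "(u \<in> {u. odd (card {k \<in> insert i S. u \<in> R k})}) = (u \<in> {u. odd (card {i \<in> S. u \<in> R i})} - R i \<union> (R i - {u. odd (card {i \<in> S. u \<in> R i})}))"
      unfolding mem_Collect_eq c by auto
  qed
qed

lemma card_single_filter[simp]: "card {i. i = v \<and> P i} = (if P v then 1 else 0)"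
proof -
  have "{i. i = v \<and> P i} = (if P v then {v} else {})" by auto
  then show ?thesis by simp
qed

lemma odd_if01[simp]: "odd (if P then 1 else 0 :: nat) = P" by simp

lemma odd_card_ne: "odd (card X) \<Longrightarrow> \<exists>x. x \<in> X"
  by (cases "X = {}") auto

lemma xsum_subset: "xsum R S \<subseteq> (\<Union>i\<in>S. R i)"
  unfolding xsum_def by (auto dest!: odd_card_ne)

definition redu_asg :: "(nat \<Rightarrow> nat set) \<Rightarrow> (nat \<Rightarrow> bool) \<Rightarrow> nat \<Rightarrow> bool" where
  "redu_asg R \<alpha> i = odd (card {u \<in> R i. \<alpha> u})"

lemma parity_xsum:
  assumes "finite S" "\<forall>i\<in>S. finite (R i)"
  shows "odd (card {u \<in> xsum R S. \<alpha> u}) = odd (card {i \<in> S. redu_asg R \<alpha> i})"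
  using assms
proof (induction S rule: finite_induct)
  case empty then show ?case by simp
next
  case (insert i S)
  have fx: "finite (xsum R S)" using insert xsum_subset
    by (meson finite_UN_I finite_subset insert_iff)
  have "{u \<in> xsum R (insert i S). \<alpha> u} =
     ({u \<in> xsum R S. \<alpha> u} - {u \<in> R i. \<alpha> u}) \<union> ({u \<in> R i. \<alpha> u} - {u \<in> xsum R S. \<alpha> u})"
    using xsum_insert[OF insert(1,2)] by auto
  then have "odd (card {u \<in> xsum R (insert i S). \<alpha> u}) =
     (odd (card {u \<in> xsum R S. \<alpha> u}) \<noteq> odd (card {u \<in> R i. \<alpha> u}))"
    using card_symdiff_parity[of "{u \<in> xsum R S. \<alpha> u}" "{u \<in> R i. \<alpha> u}"] fx insert by simp
  then show ?case using insert card_filter_insert[OF insert(1,2)]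
    by (simp add: redu_asg_def)
qed

definition limg :: "(nat \<Rightarrow> nat set) \<Rightarrow> lclause \<Rightarrow> lclause" where
  "limg R L = (\<lambda>e. (xsum R (fst e), snd e)) ` L"

lemma eval_limg:
  assumes "\<forall>e\<in>L. fst e \<subseteq> {..<n'}" "\<forall>i<n'. finite (R i)"
  shows "eval_lclause \<alpha> (limg R L) = eval_lclause (redu_asg R \<alpha>) L"
proof -
  have "eval_leq \<alpha> (xsum R (fst e), snd e) = eval_leq (redu_asg R \<alpha>) e" if "e \<in> L" for e
  proof -
    have "finite (fst e)" using assms that finite_subset by blast
    moreover have "\<forall>i\<in>fst e. finite (R i)" using assms that by blast
    ultimately show ?thesis unfolding eval_leq_def using parity_xsum by simp
  qed
  then show ?thesis unfolding eval_lclause_def limg_def by auto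
qed

lemma limg_clause: "limg R (clause_lclause g) = subst_clause R g"
  unfolding limg_def clause_lclause_def subst_clause_def image_image lit_eq_def by simp

lemma limg_over:
  assumes "lclause_over n' L" "\<forall>i<n'. R i \<subseteq> {..<n}"
  shows "lclause_over n (limg R L)"
proof -
  have "xsum R S \<subseteq> {..<n}" if "S \<subseteq> {..<n'}" for S
    using xsum_subset[of R S] assms(2) that by blast
  then show ?thesis using assms(1) unfolding lclause_over_def limg_def by auto
qed

lemma limg_res: "res_rule X Y L \<Longrightarrow> res_rule (limg R X) (limg R Y) (limg R L)"
proof -
  assume "res_rule X Y L"
  then obtain f C D where h: "X = insert (f, False) C" "Y = insert (f, True) D" "L = C \<union> D"
    unfolding res_rule_def by blast
  show ?thesis unfolding res_rule_def
    by (rule exI[of _ "xsum R f"], rule exI[of _ "limg R C"], rule exI[of _ "limg R D"])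
       (simp add: h limg_def image_Un)
qed

lemma limg_empty[simp]: "limg R {} = {}" by (simp add: limg_def)

lemma unit_sum_eval:
  assumes "finite J" "\<forall>j\<in>J. eval_leq \<alpha> (lit_eq (the_elem (F ! j)))"
  shows "eval_leq \<alpha> (unit_sum F J)"
  using assms
proof (induction J rule: finite_induct)
  case empty then show ?case by (simp add: unit_sum_def eval_leq_def)
next
  case (insert j J)
  define v where "v = fst (the_elem (F ! j))"
  define d where "d = snd (the_elem (F ! j))"
  define S where "S = fst (unit_sum F J)"
  have hv: "\<alpha> v = d" using insert(4) unfolding v_def d_def eval_leq_def lit_eq_def by simp
  have IH: "odd (card {u \<in> S. \<alpha> u}) = snd (unit_sum F J)" using insert unfolding S_def eval_leq_def by simp
  have fS: "finite S" unfolding S_def unit_sum_def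
    by (rule finite_subset[of _ "(\<lambda>j. fst (the_elem (F ! j))) ` J"])
       (use insert(1) in \<open>auto dest!: odd_card_ne\<close>)
  have c: "card {k \<in> insert j J. fst (the_elem (F ! k)) = u} = card {k \<in> J. fst (the_elem (F ! k)) = u} + (if v = u then 1 else 0)" for u
    using card_filter_insert[OF insert(1,2), of "\<lambda>k. fst (the_elem (F ! k)) = u"] by (simp add: v_def)
  have c2: "card {k \<in> insert j J. snd (the_elem (F ! k))} = card {k \<in> J. snd (the_elem (F ! k))} + (if d then 1 else 0)"
    using card_filter_insert[OF insert(1,2), of "\<lambda>k. snd (the_elem (F ! k))"] by (simp add: d_def)
  have f1: "fst (unit_sum F (insert j J)) = (S - {v}) \<union> ({v} - S)"
    unfolding S_def unit_sum_def fst_conv set_eq_iff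
  proof
    fix u show "(u \<in> {u. odd (card {k \<in> insert j J. fst (the_elem (F ! k)) = u})}) = (u \<in> {u. odd (card {j \<in> J. fst (the_elem (F ! j)) = u})} - {v} \<union> ({v} - {u. odd (card {j \<in> J. fst (the_elem (F ! j)) = u})}))"
      unfolding mem_Collect_eq c by auto
  qed
  have s1: "snd (unit_sum F (insert j J)) = (snd (unit_sum F J) \<noteq> d)"
    unfolding unit_sum_def snd_conv c2 by auto
  have "{u \<in> (S - {v}) \<union> ({v} - S). \<alpha> u} =
     ({u \<in> S. \<alpha> u} - {u \<in> {v}. \<alpha> u}) \<union> ({u \<in> {v}. \<alpha> u} - {u \<in> S. \<alpha> u})" by auto
  then have "odd (card {u \<in> (S - {v}) \<union> ({v} - S). \<alpha> u}) = (odd (card {u \<in> S. \<alpha> u}) \<noteq> \<alpha> v)"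
    using card_symdiff_parity[of "{u \<in> S. \<alpha> u}" "{u \<in> {v}. \<alpha> u}"] fS
    by (cases "\<alpha> v") auto
  then show ?case unfolding eval_leq_def using f1 s1 IH hv by simp
qed

lemma unit_sum_vars:
  assumes "u \<in> fst (unit_sum F J)"
  shows "\<exists>j\<in>J. fst (the_elem (F ! j)) = u"
  using assms unfolding unit_sum_def by (auto dest!: odd_card_ne)



definition beta0 :: "cnf \<Rightarrow> nat \<Rightarrow> bool" where
  "beta0 F v = ({(v, True)} \<in> set F)"

definition consistent :: "cnf \<Rightarrow> bool" where
  "consistent F = (\<forall>v. \<not> ({(v, True)} \<in> set F \<and> {(v, False)} \<in> set F))"

lemma unit_beta: "consistent F \<Longrightarrow> {(u, d)} \<in> set F \<Longrightarrow> d = beta0 F u"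
  unfolding consistent_def beta0_def by (cases d) auto

lemma clause_single[simp]: "clause_lclause {(v, b)} = {({v}, b)}"
  by (simp add: clause_lclause_def lit_eq_def)

lemma unit_line_over: "v < n \<Longrightarrow> lclause_over n {({v}, b)}"
  by (simp add: lclause_over_def)

lemma clause_over:
  assumes "cnf_over n F" "C \<in> set F"
  shows "lclause_over n (clause_lclause C)"
proof -
  have "C \<subseteq> {..<n} \<times> UNIV" using assms unfolding cnf_over_def by auto
  then have "finite C" by (rule finite_subset) auto
  then show ?thesis using assms unfolding lclause_over_def clause_lclause_def lit_eq_def cnf_over_def
    by fastforce
qed

lemma card1_unit:
  assumes "card X = 1"
  shows "X = {the_elem X}"
  using assms by (metis card_1_singletonE the_elem_eq)

lemma unitcase_eval:
  assumes "consistent F" "J \<subseteq> {..<length F}" "\<forall>j\<in>J. card (F ! j) = 1"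
  shows "eval_leq (beta0 F) (unit_sum F J)"
proof (rule unit_sum_eval)
  show "finite J" using assms(2) finite_subset by blast
  show "\<forall>j\<in>J. eval_leq (beta0 F) (lit_eq (the_elem (F ! j)))"
  proof
    fix j assume j: "j \<in> J"
    obtain u d where ud: "the_elem (F ! j) = (u, d)" by (cases "the_elem (F ! j)")
    have "F ! j = {(u, d)}" using card1_unit[of "F ! j"] assms(3) j ud by simp
    moreover have "F ! j \<in> set F" using j assms(2) by auto
    ultimately have "d = beta0 F u" using unit_beta assms(1) by metis
    then show "eval_leq (beta0 F) (lit_eq (the_elem (F ! j)))"
      unfolding ud lit_eq_def eval_leq_def by simp
  qed
qed

lemma unitcase_vars:
  assumes "consistent F" "J \<subseteq> {..<length F}" "\<forall>j\<in>J. card (F ! j) = 1"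
    "u \<in> fst (unit_sum F J)"
  shows "{(u, beta0 F u)} \<in> set F"
proof -
  obtain j where j: "j \<in> J" "fst (the_elem (F ! j)) = u" using unit_sum_vars assms(4) by blast
  obtain d where ud: "the_elem (F ! j) = (u, d)" using j by (cases "the_elem (F ! j)") auto
  have "F ! j = {(u, d)}" using card1_unit[of "F ! j"] assms(3) j ud by simp
  moreover have "F ! j \<in> set F" using j assms(2) by auto
  ultimately have "{(u, d)} \<in> set F" by simp
  moreover then have "d = beta0 F u" using unit_beta assms(1) by blast
  ultimately show ?thesis by simp
qed

lemma chain:
  assumes "finite S" "S \<noteq> {}" "S \<subseteq> {..<n}" "deriv n F Q" "\<forall>v\<in>S. {({v}, \<beta> v)} \<in> set Q"
  shows "\<exists>Q'. deriv n F (Q @ Q') \<and> length Q' \<le> 2 * (card S - 1) \<and>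
    {(S, odd (card {v \<in> S. \<beta> v}))} \<in> set (Q @ Q')"
  using assms
proof (induction S rule: finite_ne_induct)
  case (singleton x)
  have "{v \<in> {x}. \<beta> v} = (if \<beta> x then {x} else {})" by auto
  then have "odd (card {v \<in> {x}. \<beta> v}) = \<beta> x" by simp
  then show ?case using singleton by (intro exI[of _ "[]"]) simp
next
  case (insert x S)
  obtain Q1 where Q1: "deriv n F (Q @ Q1)" "length Q1 \<le> 2 * (card S - 1)"
    "{(S, odd (card {v \<in> S. \<beta> v}))} \<in> set (Q @ Q1)"
    using insert by auto
  define c where "c = odd (card {v \<in> S. \<beta> v})"
  define c' where "c' = odd (card {v \<in> insert x S. \<beta> v})"
  have cc: "c' = (c \<noteq> \<beta> x)" unfolding c_def c'_def using card_filter_insert[OF insert(1,3)] by simp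
  define W where "W = {(insert x S, c'), ({x}, \<not> \<beta> x)}"
  define T where "T = {(insert x S, c')}"
  have xn: "x < n" using insert by auto
  have oW: "lclause_over n W" unfolding W_def lclause_over_def using insert by auto
  have oT: "lclause_over n T" unfolding T_def lclause_over_def using insert by auto
  have lim: "limplies {(S, c)} W"
    unfolding limplies_def
  proof (intro allI impI)
    fix \<alpha> assume "eval_lclause \<alpha> {(S, c)}"
    then have h: "odd (card {i \<in> S. \<alpha> i}) = c" unfolding eval_lclause_def eval_leq_def by simp
    have h2: "odd (card {i \<in> insert x S. \<alpha> i}) = (c \<noteq> \<alpha> x)"
      using h card_filter_insert[OF insert(1,3), of \<alpha>] by (cases "\<alpha> x") auto
    have h3: "odd (card {i \<in> {x}. \<alpha> i}) = \<alpha> x"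
    proof -
      have "{i \<in> {x}. \<alpha> i} = (if \<alpha> x then {x} else {})" by auto
      then show ?thesis by simp
    qed
    show "eval_lclause \<alpha> W" unfolding W_def eval_lclause_def eval_leq_def
      using h2 h3 cc by (cases "\<alpha> x = \<beta> x") auto
  qed
  have d2: "deriv n F ((Q @ Q1) @ [W])"
    using deriv_snoc[OF Q1(1) oW] lim Q1(3) unfolding c_def by blast
  have ux: "{({x}, \<beta> x)} \<in> set ((Q @ Q1) @ [W])" using insert by auto
  have wx: "W \<in> set ((Q @ Q1) @ [W])" by simp
  have rr: "res_rule W {({x}, \<beta> x)} T \<or> res_rule {({x}, \<beta> x)} W T"
  proof (cases "\<beta> x")
    case True
    then have "res_rule W {({x}, \<beta> x)} T" unfolding res_rule_def W_def T_def
      by (intro exI[of _ "{x}"] exI[of _ "{(insert x S, c')}"] exI[of _ "{}"]) auto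
    then show ?thesis by blast
  next
    case False
    then have "res_rule {({x}, \<beta> x)} W T" unfolding res_rule_def W_def T_def
      by (intro exI[of _ "{x}"] exI[of _ "{}"] exI[of _ "{(insert x S, c')}"]) auto
    then show ?thesis by blast
  qed
  have d3: "deriv n F (((Q @ Q1) @ [W]) @ [T])"
    using deriv_snoc[OF d2 oT] rr ux wx by blast
  show ?case
  proof (intro exI[of _ "Q1 @ [W, T]"] conjI)
    show "deriv n F (Q @ Q1 @ [W, T])" using d3 by simp
    have "card S \<ge> 1" using insert(1,2) by (simp add: Suc_leI card_gt_0_iff)
    then show "length (Q1 @ [W, T]) \<le> 2 * (card (insert x S) - 1)"
      using Q1(2) insert(1,3) by simp
    show "{(insert x S, odd (card {v \<in> insert x S. \<beta> v}))} \<in> set (Q @ Q1 @ [W, T])"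
      unfolding T_def[symmetric] c'_def[symmetric] by simp
  qed
qed



definition cost :: "nat \<Rightarrow> cnf \<Rightarrow> (nat \<Rightarrow> nat set) \<Rightarrow> clause \<Rightarrow> nat" where
  "cost n F R g = (if ltaut (subst_clause R g) \<or> (\<exists>f\<in>set F. subst_clause R g = clause_lclause f)
     then 1 else 2 * n - 2)"

lemma subst_over:
  assumes "cnf_over n' G" "g \<in> set G" "\<forall>i<n'. R i \<subseteq> {..<n}"
  shows "lclause_over n (subst_clause R g)"
  using limg_over[OF clause_over[OF assms(1,2)] assms(3)] by (simp add: limg_clause)

lemma block:
  assumes cF: "cnf_over n F" and cG: "cnf_over n' G" and red: "simple_parity_red n F n' G R"
    and cons: "consistent F" and g: "g \<in> set G" and dQ: "deriv n F Q" and ne: "Q \<noteq> []"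
    and units: "\<forall>v<n. {(v, beta0 F v)} \<in> set F \<longrightarrow> {({v}, beta0 F v)} \<in> set Q"
  shows "\<exists>Q'. deriv n F (Q @ Q') \<and> length Q' \<le> cost n F R g \<and> subst_clause R g \<in> set (Q @ Q')"
proof -
  have Rn: "\<forall>i<n'. R i \<subseteq> {..<n}" using red unfolding simple_parity_red_def by blast
  have ov: "lclause_over n (subst_clause R g)" using subst_over[OF cG g Rn] .
  have cases: "ltaut (subst_clause R g) \<or> (\<exists>f\<in>set F. subst_clause R g = clause_lclause f)
        \<or> (card g = 1 \<and>
           (\<exists>J \<subseteq> {..<length F}. (\<forall>j\<in>J. card (F ! j) = 1) \<and>
               subst_clause R g = {unit_sum F J}))"
    using red g unfolding simple_parity_red_def by blast
  show ?thesis
  proof (cases "ltaut (subst_clause R g)")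
    case True
    have "limplies (hd Q) (subst_clause R g)" using True unfolding limplies_def ltaut_def by blast
    then have "deriv n F (Q @ [subst_clause R g])" using deriv_snoc[OF dQ ov] ne hd_in_set by blast
    then show ?thesis using True by (intro exI[of _ "[subst_clause R g]"]) (simp add: cost_def)
  next
    case nt: False
    show ?thesis
    proof (cases "\<exists>f\<in>set F. subst_clause R g = clause_lclause f")
      case True
      then have "deriv n F (Q @ [subst_clause R g])" using deriv_snoc[OF dQ ov] by blast
      then show ?thesis using True by (intro exI[of _ "[subst_clause R g]"]) (simp add: cost_def)
    next
      case nf: False
      then obtain J where J: "J \<subseteq> {..<length F}" "\<forall>j\<in>J. card (F ! j) = 1"
        "subst_clause R g = {unit_sum F J}" using cases nt by blast
      define S where "S = fst (unit_sum F J)"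
      define b where "b = snd (unit_sum F J)"
      have ev: "odd (card {i \<in> S. beta0 F i}) = b"
        using unitcase_eval[OF cons J(1,2)] unfolding eval_leq_def S_def b_def by simp
      have sub: "subst_clause R g = {(S, b)}" using J(3) S_def b_def by simp
      have Su: "\<forall>u\<in>S. {(u, beta0 F u)} \<in> set F" using unitcase_vars[OF cons J(1,2)] S_def by blast
      have Sn: "S \<subseteq> {..<n}"
      proof
        fix u assume "u \<in> S"
        then have "{(u, beta0 F u)} \<in> set F" using Su by blast
        then show "u \<in> {..<n}" using cF unfolding cnf_over_def by fastforce
      qed
      have fS: "finite S" using Sn finite_subset by blast
      have Sne: "S \<noteq> {}"
      proof
        assume "S = {}"
        then have "b = False" using ev by simp
        then have "ltaut (subst_clause R g)" using sub \<open>S = {}\<close>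
          unfolding ltaut_def eval_lclause_def eval_leq_def by simp
        then show False using nt by blast
      qed
      have uQ: "\<forall>v\<in>S. {({v}, beta0 F v)} \<in> set Q" using units Su Sn by blast
      obtain Q' where Q': "deriv n F (Q @ Q')" "length Q' \<le> 2 * (card S - 1)"
        "{(S, odd (card {v \<in> S. beta0 F v}))} \<in> set (Q @ Q')"
        using chain[OF fS Sne Sn dQ uQ] by blast
      have "card S \<le> n" using Sn by (metis card_lessThan card_mono finite_lessThan)
      then have "length Q' \<le> cost n F R g" using Q'(2) nt nf unfolding cost_def by auto
      then show ?thesis using Q' ev sub by auto
    qed
  qed
qed

lemma blocks:
  assumes cF: "cnf_over n F" and cG: "cnf_over n' G" and red: "simple_parity_red n F n' G R"
    and cons: "consistent F"
  shows "set G' \<subseteq> set G \<Longrightarrow> deriv n F Q \<Longrightarrow> Q \<noteq> [] \<Longrightarrow>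
    (\<forall>v<n. {(v, beta0 F v)} \<in> set F \<longrightarrow> {({v}, beta0 F v)} \<in> set Q) \<Longrightarrow>
    \<exists>Q'. deriv n F (Q @ Q') \<and> length Q' \<le> sum_list (map (cost n F R) G') \<and>
      (\<forall>g\<in>set G'. subst_clause R g \<in> set (Q @ Q'))"
proof (induction G' arbitrary: Q)
  case Nil then show ?case by (intro exI[of _ "[]"]) simp
next
  case (Cons g G')
  obtain Q1 where Q1: "deriv n F (Q @ Q1)" "length Q1 \<le> cost n F R g" "subst_clause R g \<in> set (Q @ Q1)"
    using block[OF cF cG red cons _ Cons.prems(2,3,4)] Cons.prems(1) by auto
  obtain Q2 where Q2: "deriv n F ((Q @ Q1) @ Q2)" "length Q2 \<le> sum_list (map (cost n F R) G')"
    "\<forall>g\<in>set G'. subst_clause R g \<in> set ((Q @ Q1) @ Q2)"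
    using Cons.IH[of "Q @ Q1"] Cons.prems Q1(1) by auto
  show ?case
    by (intro exI[of _ "Q1 @ Q2"]) (use Q1 Q2 in auto)
qed

lemma simulate:
  assumes dP: "deriv n F P" and sP: "\<forall>g\<in>set G. subst_clause R g \<in> set P"
    and Rn: "\<forall>i<n'. R i \<subseteq> {..<n}"
  shows "deriv n' G Ls \<Longrightarrow> deriv n F (P @ map (limg R) Ls)"
proof (induction Ls rule: rev_induct)
  case Nil then show ?case using dP by simp
next
  case (snoc L Ls)
  from deriv_snoc_D[OF snoc.prems] have d: "deriv n' G Ls" and oL: "lclause_over n' L" and
    c: "(\<exists>C\<in>set G. L = clause_lclause C) \<or> (\<exists>X\<in>set Ls. \<exists>Y\<in>set Ls. res_rule X Y L)
     \<or> (\<exists>X\<in>set Ls. limplies X L)" by auto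
  have IH: "deriv n F (P @ map (limg R) Ls)" using snoc.IH d by blast
  have oL': "lclause_over n (limg R L)" using limg_over[OF oL Rn] .
  have fR: "\<forall>i<n'. finite (R i)" using Rn finite_subset by blast
  have "(\<exists>C\<in>set F. limg R L = clause_lclause C) \<or>
      (\<exists>X\<in>set (P @ map (limg R) Ls). \<exists>Y\<in>set (P @ map (limg R) Ls). res_rule X Y (limg R L))
     \<or> (\<exists>X\<in>set (P @ map (limg R) Ls). limplies X (limg R L))"
    using c
  proof (elim disjE)
    assume "\<exists>C\<in>set G. L = clause_lclause C"
    then obtain C where "C \<in> set G" "L = clause_lclause C" by blast
    then have "limg R L \<in> set (P @ map (limg R) Ls)" using sP limg_clause by simp
    then show ?thesis unfolding limplies_def by blast
  next
    assume "\<exists>X\<in>set Ls. \<exists>Y\<in>set Ls. res_rule X Y L"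
    then obtain X Y where "X \<in> set Ls" "Y \<in> set Ls" "res_rule X Y L" by blast
    then show ?thesis using limg_res by fastforce
  next
    assume "\<exists>X\<in>set Ls. limplies X L"
    then obtain X where X: "X \<in> set Ls" "limplies X L" by blast
    have oX: "lclause_over n' X" using deriv_over[OF d X(1)] .
    have "limplies (limg R X) (limg R L)" unfolding limplies_def
    proof (intro allI impI)
      fix \<alpha> assume "eval_lclause \<alpha> (limg R X)"
      then have "eval_lclause (redu_asg R \<alpha>) X"
        using eval_limg[of X n' R \<alpha>] oX fR unfolding lclause_over_def by blast
      then have "eval_lclause (redu_asg R \<alpha>) L" using X(2) unfolding limplies_def by blast
      then show "eval_lclause \<alpha> (limg R L)"
        using eval_limg[of L n' R \<alpha>] oL fR unfolding lclause_over_def by blast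
    qed
    then show ?thesis using X(1) by auto
  qed
  then have "deriv n F ((P @ map (limg R) Ls) @ [limg R L])" using deriv_snoc[OF IH oL'] by blast
  then show ?case by simp
qed

lemma sum_bound:
  fixes c :: "'a \<Rightarrow> nat"
  assumes "x \<in> set xs" "c x = 1" "\<forall>y\<in>set xs. c y \<le> K"
  shows "sum_list (map c xs) \<le> (length xs - 1) * K + 1"
proof -
  have gen: "\<forall>y\<in>set ys. c y \<le> K \<Longrightarrow> sum_list (map c ys) \<le> length ys * K" for ys
    by (induction ys) auto
  have "sum_list (map c xs) = c x + sum_list (map c (remove1 x xs))"
    using assms(1) by (simp add: sum_list_map_remove1)
  moreover have "sum_list (map c (remove1 x xs)) \<le> length (remove1 x xs) * K"
    using gen assms(3) by (meson notin_set_remove1)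
  ultimately show ?thesis using assms(1,2) by (simp add: length_remove1)
qed



theorem theoremC1:
  fixes n n' s :: nat and F G :: cnf and R :: "nat \<Rightarrow> nat set" and Ls :: "lclause list"
  assumes "cnf_over n F" and "cnf_over n' G"
    and "simple_parity_red n F n' G R"
    and "resxor_refutation n' G Ls" and "length Ls = s"
  shows "\<exists>Ls'. resxor_refutation n F Ls' \<and> length Ls' = 2 * n * length G + s"
proof -
  note cF = assms(1) and cG = assms(2) and red = assms(3) and ref = assms(4)
  have Rn: "\<forall>i<n'. R i \<subseteq> {..<n}" using red unfolding simple_parity_red_def by blast
  have fR: "\<forall>i<n'. finite (R i)" using Rn finite_subset by blast
  have dLs: "deriv n' G Ls" and LsNe: "Ls \<noteq> []" and lastLs: "last Ls = {}"
    using ref deriv_refutation by auto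
  have s1: "s \<ge> 1" using LsNe assms(5) by (cases Ls) auto
  obtain gg where "gg \<in> set G" using refutation_unsat[OF ref] by blast
  then have m1: "length G \<ge> 1" by (cases G) auto
  show ?thesis
  proof (cases "consistent F")
    case False
    then obtain v where v: "{(v, True)} \<in> set F" "{(v, False)} \<in> set F" unfolding consistent_def by blast
    have vn: "v < n" using v cF unfolding cnf_over_def by fastforce
    define L1 where "L1 = {({v}, True)}"
    define L2 where "L2 = {({v}, False)}"
    have i1: "\<exists>C\<in>set F. L1 = clause_lclause C" unfolding L1_def
      by (rule bexI[OF _ v(1)]) simp
    have i2: "\<exists>C\<in>set F. L2 = clause_lclause C" unfolding L2_def
      by (rule bexI[OF _ v(2)]) simp
    have o1: "lclause_over n L1" unfolding L1_def using unit_line_over[OF vn] .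
    have o2: "lclause_over n L2" unfolding L2_def using unit_line_over[OF vn] .
    have "deriv n F ([] @ [L1])" by (rule deriv_snoc[OF deriv_Nil o1 disjI1[OF i1]])
    then have d1: "deriv n F [L1]" by simp
    have "deriv n F ([L1] @ [L2])" by (rule deriv_snoc[OF d1 o2 disjI1[OF i2]])
    then have d2: "deriv n F [L1, L2]" by simp
    have "res_rule L2 L1 {}" unfolding res_rule_def L1_def L2_def
      by (intro exI[of _ "{v}"] exI[of _ "{}"]) simp
    then have "\<exists>X\<in>set [L1, L2]. \<exists>Y\<in>set [L1, L2]. res_rule X Y {}" by auto
    then have "deriv n F ([L1, L2] @ [{}])"
      by (intro deriv_snoc[OF d2]) (simp_all add: lclause_over_def)
    then have d3: "deriv n F [L1, L2, {}]" by simp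
    have "1 \<le> n" using vn by simp
    then have "1 * 1 \<le> n * length G" using m1 by (rule mult_le_mono)
    then have "3 \<le> 2 * n * length G + s" using s1 by linarith
    then show ?thesis using pad[OF d3] by simp
  next
    case cons: True
    define b0 where "b0 = beta0 F"
    obtain g0 where g0: "g0 \<in> set G" "\<not> eval_lclause (redu_asg R b0) (clause_lclause g0)"
      using refutation_unsat[OF ref] by blast
    have og0: "lclause_over n' (clause_lclause g0)" using clause_over[OF cG g0(1)] .
    have ne0: "\<not> eval_lclause b0 (subst_clause R g0)"
    proof -
      have "eval_lclause b0 (limg R (clause_lclause g0)) = eval_lclause (redu_asg R b0) (clause_lclause g0)"
        using eval_limg[of "clause_lclause g0" n' R b0] og0 fR unfolding lclause_over_def by blast
      then show ?thesis using g0(2) limg_clause by simp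
    qed
    have cases: "ltaut (subst_clause R g0) \<or> (\<exists>f\<in>set F. subst_clause R g0 = clause_lclause f)
        \<or> (card g0 = 1 \<and>
           (\<exists>J \<subseteq> {..<length F}. (\<forall>j\<in>J. card (F ! j) = 1) \<and>
               subst_clause R g0 = {unit_sum F J}))"
      using red g0(1) unfolding simple_parity_red_def by blast
    have "\<not> ltaut (subst_clause R g0)" using ne0 unfolding ltaut_def by blast
    moreover have "\<not> (\<exists>J \<subseteq> {..<length F}. (\<forall>j\<in>J. card (F ! j) = 1) \<and>
               subst_clause R g0 = {unit_sum F J})"
    proof
      assume "\<exists>J \<subseteq> {..<length F}. (\<forall>j\<in>J. card (F ! j) = 1) \<and> subst_clause R g0 = {unit_sum F J}"
      then obtain J where J: "J \<subseteq> {..<length F}" "\<forall>j\<in>J. card (F ! j) = 1"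
        "subst_clause R g0 = {unit_sum F J}" by blast
      have "eval_leq b0 (unit_sum F J)" using unitcase_eval[OF cons J(1,2)] b0_def by simp
      then show False using ne0 J(3) unfolding eval_lclause_def by simp
    qed
    ultimately obtain f0 where f0: "f0 \<in> set F" "subst_clause R g0 = clause_lclause f0"
      using cases by blast
    have cost0: "cost n F R g0 = 1" using f0 unfolding cost_def by auto
    show ?thesis
    proof (cases "n = 0")
      case True
      then have "f0 = {}" using cF f0(1) unfolding cnf_over_def by fastforce
      then have "deriv n F [{}]" using f0(1)
        by (intro deriv_initials) (auto simp: lclause_over_def clause_lclause_def)
      then show ?thesis using pad[of n F "[{}]"] s1 by simp
    next
      case npos: False
      define UL where "UL = map (\<lambda>v. {({v}, b0 v)}) (filter (\<lambda>v. {(v, b0 v)} \<in> set F) [0..<n])"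
      define P0 where "P0 = (if UL = [] then [clause_lclause f0] else UL)"
      have dP0: "deriv n F P0"
      proof (rule deriv_initials)
        show "\<forall>L\<in>set P0. lclause_over n L \<and> (\<exists>C\<in>set F. L = clause_lclause C)"
        proof (cases "UL = []")
          case True then show ?thesis unfolding P0_def using clause_over[OF cF f0(1)] f0(1) by auto
        next
          case False
          have "\<forall>L\<in>set UL. lclause_over n L \<and> (\<exists>C\<in>set F. L = clause_lclause C)"
          proof
            fix L assume "L \<in> set UL"
            then obtain v where "v < n" "{(v, b0 v)} \<in> set F" "L = {({v}, b0 v)}" unfolding UL_def by auto
            then show "lclause_over n L \<and> (\<exists>C\<in>set F. L = clause_lclause C)"
              by (intro conjI bexI[of _ "{(v, b0 v)}"]) (simp_all add: unit_line_over)
          qed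
          then show ?thesis unfolding P0_def using False by simp
        qed
      qed
      have P0ne: "P0 \<noteq> []" unfolding P0_def by simp
      have lP0: "length P0 \<le> n"
      proof -
        have "length UL \<le> n" unfolding UL_def
          using length_filter_le[of _ "[0..<n]"] by simp
        then show ?thesis unfolding P0_def using npos by auto
      qed
      have uP0: "\<forall>v<n. {(v, beta0 F v)} \<in> set F \<longrightarrow> {({v}, beta0 F v)} \<in> set P0"
      proof (intro allI impI)
        fix v assume "v < n" "{(v, beta0 F v)} \<in> set F"
        then have "{({v}, b0 v)} \<in> set UL" unfolding UL_def b0_def by auto
        then show "{({v}, beta0 F v)} \<in> set P0" unfolding P0_def b0_def by auto
      qed
      obtain Q' where Q': "deriv n F (P0 @ Q')" "length Q' \<le> sum_list (map (cost n F R) G)"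
        "\<forall>g\<in>set G. subst_clause R g \<in> set (P0 @ Q')"
        using blocks[OF cF cG red cons order.refl dP0 P0ne uP0] by blast
      have cb: "\<forall>y\<in>set G. cost n F R y \<le> 2 * n - 1" using npos unfolding cost_def by auto
      have "sum_list (map (cost n F R) G) \<le> (length G - 1) * (2 * n - 1) + 1"
        using sum_bound[OF g0(1) cost0 cb] .
      moreover have "n + ((length G - 1) * (2 * n - 1) + 1) \<le> 2 * n * length G"
      proof -
        obtain k where k: "length G = Suc k" using m1 by (cases "length G") auto
        obtain n0 where n0: "n = Suc n0" using npos by (cases n) auto
        show ?thesis unfolding k n0 by (simp add: algebra_simps)
      qed
      ultimately have lenP: "length (P0 @ Q') \<le> 2 * n * length G" using lP0 Q'(2) by simp
      have dF: "deriv n F ((P0 @ Q') @ map (limg R) Ls)"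
        using simulate[OF Q'(1) Q'(3) Rn dLs] .
      have "last ((P0 @ Q') @ map (limg R) Ls) = {}" using LsNe lastLs by (simp add: last_map)
      moreover have "length ((P0 @ Q') @ map (limg R) Ls) \<le> 2 * n * length G + s"
        using lenP assms(5) by simp
      ultimately show ?thesis using pad[OF dF] LsNe by simp
    qed
  qed
qed

end
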